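(* Let $q:\mathcal U\to\mathbb R^p$ be continuous, differentiable on $\mathrm{Int}(\mathcal U)$, with $Dq$ symmetric and positive definite on $\mathrm{Int}(\mathcal U)$, and with $q(\mathcal U)$ convex. Then $q$ is strictly cyclically monotone on $\mathrm{Int}(\mathcal U)$: for every $k\ge1$ and $u^1,\dots,u^{k+1}\in\mathrm{Int}(\mathcal U)$ with $u^{k+1}=u^1$, $$\sum_{i=1}^k (u^{i+1})^\top\big(q(u^{i+1})-q(u^i)\big)\ge0,$$ and the inequality is strict unless $u^1=\dots=u^k$.
   Context: $\mathcal U\subset\mathbb R^p$ is a compact convex set with nonempty interior. $Dq$ denotes the Jacobian of $q$. *)

theory Defs
  imports "HOL-Analysis.Analysis"
begin

end

theory Submission
  imports Defs "HOL-Complex_Analysis.Cauchy_Integral_Theorem"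
begin


lemma dist_mid_mid: fixes x y z :: "'a::real_normed_vector"
  shows "dist (midpoint x y) (midpoint x z) = dist y z / 2"
    "dist (midpoint y x) (midpoint x z) = dist y z / 2"
    "dist (midpoint x y) (midpoint z x) = dist y z / 2"
    "dist (midpoint y x) (midpoint z x) = dist y z / 2"
proof -
  have e: "midpoint x y - midpoint x z = (1/2) *\<^sub>R (y - z)"
    by (simp add: midpoint_def algebra_simps)
  have "dist (midpoint x y) (midpoint x z) = dist y z / 2"
    unfolding dist_norm e by simp
  then show "dist (midpoint x y) (midpoint x z) = dist y z / 2"
    "dist (midpoint y x) (midpoint x z) = dist y z / 2"
    "dist (midpoint x y) (midpoint z x) = dist y z / 2"
    "dist (midpoint y x) (midpoint z x) = dist y z / 2"
    by (simp_all add: midpoint_sym)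
qed

lemma tri_quad:
  fixes L :: "'a::euclidean_space \<Rightarrow> 'a \<Rightarrow> real"
  assumes S: "convex hull {a,b,c} \<subseteq> S"
    and mid: "\<And>x y. x\<in>S \<Longrightarrow> y\<in>S \<Longrightarrow> L x y = L x (midpoint x y) + L (midpoint x y) y"
    and rev: "\<And>x y. x\<in>S \<Longrightarrow> y\<in>S \<Longrightarrow> L y x = - L x y"
    and dist: "dist a b \<le> K" "dist b c \<le> K" "dist c a \<le> K"
    and e: "e * K^2 \<le> \<bar>L a b + L b c + L c a\<bar>"
  shows "\<exists>a' b' c'.
           a' \<in> convex hull {a,b,c} \<and> b' \<in> convex hull {a,b,c} \<and> c' \<in> convex hull {a,b,c} \<and>
           dist a' b' \<le> K/2  \<and>  dist b' c' \<le> K/2  \<and>  dist c' a' \<le> K/2  \<and>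
           e * (K/2)^2 \<le> \<bar>L a' b' + L b' c' + L c' a'\<bar>"
proof -
  define a' where "a' = midpoint b c"
  define b' where "b' = midpoint c a"
  define c' where "c' = midpoint a b"
  have H: "a \<in> convex hull {a,b,c}" "b \<in> convex hull {a,b,c}" "c \<in> convex hull {a,b,c}"
    by (simp_all add: hull_inc)
  have H': "a' \<in> convex hull {a,b,c}" "b' \<in> convex hull {a,b,c}" "c' \<in> convex hull {a,b,c}"
    unfolding a'_def b'_def c'_def using H by (simp_all add: midpoints_in_convex_hull)
  have inS: "a \<in> S" "b \<in> S" "c \<in> S" "a' \<in> S" "b' \<in> S" "c' \<in> S"
    using H H' S by blast+
  have *: "L a b + L b c + L c a =
          (L a c' + L c' b' + L b' a) +
          (L a' c' + L c' b + L b a') +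
          (L a' c + L c b' + L b' a') +
          (L a' b' + L b' c' + L c' a')"
    using mid[of a b] mid[of b c] mid[of c a] rev[of c' b'] rev[of a' c'] rev[of b' a'] inS
    unfolding a'_def b'_def c'_def by simp
  have dd: "dist a c' \<le> K/2" "dist c' b' \<le> K/2" "dist b' a \<le> K/2"
     "dist a' c' \<le> K/2" "dist c' b \<le> K/2" "dist b a' \<le> K/2"
     "dist a' c \<le> K/2" "dist c b' \<le> K/2" "dist b' a' \<le> K/2"
     "dist a' b' \<le> K/2" "dist b' c' \<le> K/2" "dist c' a' \<le> K/2"
    unfolding a'_def b'_def c'_def using dist
    by (simp_all add: dist_midpoint dist_mid_mid dist_commute)
  have "e * K\<^sup>2 / 4 \<le> \<bar>L a c' + L c' b' + L b' a\<bar> \<or>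
        e * K\<^sup>2 / 4 \<le> \<bar>L a' c' + L c' b + L b a'\<bar> \<or>
        e * K\<^sup>2 / 4 \<le> \<bar>L a' c + L c b' + L b' a'\<bar> \<or>
        e * K\<^sup>2 / 4 \<le> \<bar>L a' b' + L b' c' + L c' a'\<bar>"
    using e unfolding * by linarith
  moreover have "e * (K/2)^2 = e * K\<^sup>2 / 4" by (simp add: power2_eq_square)
  ultimately show ?thesis using H H' dd by metis
qed

lemma goursat_generic:
  fixes L :: "'a::euclidean_space \<Rightarrow> 'a \<Rightarrow> real"
  assumes S: "convex hull {a,b,c} \<subseteq> S"
    and mid: "\<And>x y. x\<in>S \<Longrightarrow> y\<in>S \<Longrightarrow> L x y = L x (midpoint x y) + L (midpoint x y) y"
    and rev: "\<And>x y. x\<in>S \<Longrightarrow> y\<in>S \<Longrightarrow> L y x = - L x y"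
    and small: "\<And>p e. p \<in> S \<Longrightarrow> e > 0 \<Longrightarrow> \<exists>k>0. \<forall>a b c. dist a b \<le> k \<and> dist b c \<le> k \<and> dist c a \<le> k \<and>
              p \<in> convex hull {a,b,c} \<and> convex hull {a,b,c} \<subseteq> S
              \<longrightarrow> \<bar>L a b + L b c + L c a\<bar> \<le> e*(dist a b + dist b c + dist c a)^2"
  shows "L a b + L b c + L c a = 0"
proof (rule ccontr)
  let ?T = "\<lambda>x y z. L x y + L y z + L z x"
  assume ynz: "?T a b c \<noteq> 0"
  define K where "K = 1 + max (dist a b) (max (dist b c) (dist c a))"
  define e where "e = \<bar>?T a b c\<bar> / K^2"
  have K1: "K \<ge> 1"  by (simp add: K_def max.coboundedI1)
  then have K: "K > 0" by linarith
  have [iff]: "dist a b \<le> K" "dist b c \<le> K" "dist c a \<le> K"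
    by (simp_all add: K_def)
  have e: "e > 0"
    unfolding e_def using ynz K1 by simp
  define At where "At x y z n \<longleftrightarrow>
      convex hull {x,y,z} \<subseteq> convex hull {a,b,c} \<and>
      dist x y \<le> K/2^n \<and> dist y z \<le> K/2^n \<and> dist z x \<le> K/2^n \<and>
      \<bar>?T x y z\<bar> \<ge> e*(K/2^n)^2"
    for x y z n
  have At0: "At a b c 0"
    using K by (simp add: At_def e_def)
  { fix x y z n
    assume At: "At x y z n"
    then have S': "convex hull {x,y,z} \<subseteq> S" using S unfolding At_def by blast
    have "\<exists>x' y' z'. At x' y' z' (Suc n) \<and> convex hull {x',y',z'} \<subseteq> convex hull {x,y,z}"
      using At tri_quad [OF S' mid rev, of "K/2^n" e]
      apply (simp add: At_def algebra_simps)
      apply (meson convex_hull_subset empty_subsetI insert_subset subsetCE)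
      done
  } note AtSuc = this
  obtain fa fb fc
    where f0 [simp]: "fa 0 = a" "fb 0 = b" "fc 0 = c"
      and cosb: "\<And>n. convex hull {fa n, fb n, fc n} \<subseteq> convex hull {a,b,c}"
      and dist: "\<And>n. dist (fa n) (fb n) \<le> K/2^n"
                "\<And>n. dist (fb n) (fc n) \<le> K/2^n"
                "\<And>n. dist (fc n) (fa n) \<le> K/2^n"
      and no: "\<And>n. \<bar>?T (fa n) (fb n) (fc n)\<bar> \<ge> e * (K/2^n)^2"
      and conv_le: "\<And>n. convex hull {fa(Suc n), fb(Suc n), fc(Suc n)} \<subseteq> convex hull {fa n, fb n, fc n}"
    by (rule Chain3 [of At, OF At0 AtSuc]) (auto simp: At_def)
  obtain x where x: "\<And>n. x \<in> convex hull {fa n, fb n, fc n}"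
  proof (rule bounded_closed_nest)
    show "\<And>n. closed (convex hull {fa n, fb n, fc n})"
      by (simp add: compact_imp_closed finite_imp_compact_convex_hull)
    show "\<And>m n. m \<le> n \<Longrightarrow> convex hull {fa n, fb n, fc n} \<subseteq> convex hull {fa m, fb m, fc m}"
      by (erule transitive_stepwise_le) (auto simp: conv_le)
  qed (fastforce intro: finite_imp_bounded_convex_hull)+
  then have xin: "x \<in> S"
    using S f0 by (metis subsetD)
  obtain k where k: "k > 0" and le: "\<And>x' y' z'.
               \<lbrakk>dist x' y' \<le> k; dist y' z' \<le> k; dist z' x' \<le> k;
                x \<in> convex hull {x',y',z'};
                convex hull {x',y',z'} \<subseteq> S\<rbrakk>
               \<Longrightarrow> \<bar>?T x' y' z'\<bar> \<le> (e/10) * (dist x' y' + dist y' z' + dist z' x')\<^sup>2"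
    using small[OF xin, of "e/10"] e by auto
  obtain n where Kk: "K / k < 2 ^ n" using real_arch_pow[of 2 "K/k"] by auto
  have "K / 2 ^ n < k" using Kk k
    by (auto simp: field_simps)
  then have DD: "dist (fa n) (fb n) \<le> k" "dist (fb n) (fc n) \<le> k" "dist (fc n) (fa n) \<le> k"
    using dist [of n]  k
    by linarith+
  have dle: "(dist (fa n) (fb n) + dist (fb n) (fc n) + dist (fc n) (fa n))\<^sup>2
           \<le> (3 * K / 2 ^ n)\<^sup>2"
    using dist [of n] e K
    by (simp add: abs_le_square_iff [symmetric])
  have "(e/10) * (dist (fa n) (fb n) + dist (fb n) (fc n) + dist (fc n) (fa n))\<^sup>2 \<le> (e/10) * (3 * K / 2 ^ n)\<^sup>2"
    using dle e mult_le_cancel_left_pos by (simp add: mult_left_mono)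
  also have "\<dots> < e * (K/2^n)^2"
    using e K by (simp add: field_simps power2_eq_square)
  also have "\<dots> \<le> \<bar>?T (fa n) (fb n) (fc n)\<bar>" by (rule no)
  finally show False
    using le [OF DD x] cosb[of n] S by auto
qed

lemma mid_eq: "midpoint x y = x + (1/2) *\<^sub>R (y - (x::'a::real_vector))"
  unfolding midpoint_def by (simp add: algebra_simps scaleR_2[symmetric] flip: scaleR_add_left)
lemma seg_rest: "y - ((x::'a::real_vector) + a *\<^sub>R (y - x)) = (1 - a) *\<^sub>R (y - x)" by (simp add: algebra_simps)
lemma seg_shift: "(x::'a::real_vector) + a *\<^sub>R (y-x) + t *\<^sub>R (y - (x + a *\<^sub>R (y - x))) = x + (a + t*(1-a)) *\<^sub>R (y - x)"
  unfolding seg_rest by (simp add: scaleR_add_left)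

definition LI :: "('a::euclidean_space \<Rightarrow> 'a) \<Rightarrow> 'a \<Rightarrow> 'a \<Rightarrow> real" where
  "LI G x y = integral {0..1} (\<lambda>t. G (x + t *\<^sub>R (y - x)) \<bullet> (y - x))"

lemma seg_pt: "t \<in> {0..1} \<Longrightarrow> x + t *\<^sub>R (y - x) \<in> closed_segment x y"
proof -
  assume "t \<in> {0..1}"
  moreover have "x + t *\<^sub>R (y - x) = (1 - t) *\<^sub>R x + t *\<^sub>R y" by (simp add: algebra_simps)
  ultimately show ?thesis unfolding closed_segment_def by auto
qed

lemma LI_cont:
  assumes "continuous_on (closed_segment x y) G"
  shows "continuous_on {0..1} (\<lambda>t. G (x + t *\<^sub>R (y - x)) \<bullet> (y - x))"
proof -
  have "continuous_on {0..1} (\<lambda>t. G (x + t *\<^sub>R (y - x)))"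
    by (rule continuous_on_compose2[OF assms]) (auto intro!: continuous_intros seg_pt)
  then show ?thesis by (intro continuous_intros)
qed

lemma LI_mid:
  assumes G: "continuous_on (closed_segment x y) G"
  shows "LI G x y = LI G x (midpoint x y) + LI G (midpoint x y) y"
proof -
  define h where "h s = G (x + s *\<^sub>R (y - x)) \<bullet> (y - x)" for s
  have hc: "continuous_on {0..1} h" unfolding h_def by (rule LI_cont[OF G])
  have e1: "G (x + t *\<^sub>R (midpoint x y - x)) \<bullet> (midpoint x y - x) = (1/2) *\<^sub>R h (t/2)" for t
  proof -
    have "midpoint x y - x = (1/2) *\<^sub>R (y - x)" unfolding mid_eq by simp
    then show ?thesis unfolding h_def by (simp add: inner_scaleR_right)
  qed
  have e2: "G (midpoint x y + t *\<^sub>R (y - midpoint x y)) \<bullet> (y - midpoint x y) = (1/2) *\<^sub>R h (1/2 + t/2)" for t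
  proof -
    have a: "y - midpoint x y = (1/2) *\<^sub>R (y - x)" unfolding mid_eq seg_rest by simp
    have b: "midpoint x y + t *\<^sub>R (y - midpoint x y) = x + (1/2 + t/2) *\<^sub>R (y - x)"
      unfolding mid_eq seg_shift by simp
    show ?thesis unfolding h_def a[symmetric] b by (simp add: a inner_scaleR_right)
  qed
  have i1: "((\<lambda>t. (1/2) *\<^sub>R h (t/2)) has_integral integral {0/2..1/2} h) {0..1}"
    by (rule has_integral_substitution[where c=0 and d=1]) (auto intro!: hc derivative_eq_intros)
  have i2: "((\<lambda>t. (1/2) *\<^sub>R h (1/2 + t/2)) has_integral integral {1/2 + 0/2..1/2+1/2} h) {0..1}"
    by (rule has_integral_substitution[where c=0 and d=1]) (auto intro!: hc derivative_eq_intros)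
  have "LI G x (midpoint x y) = integral {0..1/2} h"
    unfolding LI_def e1 using integral_unique[OF i1] by simp
  moreover have "LI G (midpoint x y) y = integral {1/2..1} h"
    unfolding LI_def e2 using integral_unique[OF i2] by simp
  moreover have "LI G x y = integral {0..1} h" unfolding LI_def h_def by simp
  moreover have "integral {0..1/2} h + integral {1/2..1} h = integral {0..1} h"
    by (rule Henstock_Kurzweil_Integration.integral_combine) (auto intro: integrable_continuous_real hc)
  ultimately show ?thesis by simp
qed

lemma LI_rev:
  assumes G: "continuous_on (closed_segment x y) G"
  shows "LI G y x = - LI G x y"
proof -
  define h where "h s = G (x + s *\<^sub>R (y - x)) \<bullet> (y - x)" for s
  have hc: "continuous_on {0..1} h" unfolding h_def by (rule LI_cont[OF G])
  have e: "G (y + t *\<^sub>R (x - y)) \<bullet> (x - y) = - h (1 - t)" for t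
  proof -
    have "y + t *\<^sub>R (x - y) = x + (1 - t) *\<^sub>R (y - x)" by (simp add: algebra_simps)
    moreover have "x - y = - (y - x)" by simp
    ultimately show ?thesis unfolding h_def by (simp only: inner_minus_right)
  qed
  have hc': "continuous_on {-1+1..0+1} (\<lambda>t. h (1 - t))"
    by (rule continuous_on_compose2[OF hc]) (auto intro!: continuous_intros)
  have "integral {-1..0} ((\<lambda>t. h (1 - t)) \<circ> (\<lambda>x. x + 1)) = integral {-1+1..0+1} (\<lambda>t. h (1 - t))"
    by (rule integral_shift[OF hc'])
  moreover have "integral {-1..0} ((\<lambda>t. h (1 - t)) \<circ> (\<lambda>x. x + 1)) = integral {-1..-0} (\<lambda>x. h (-x))"
    by (simp add: o_def)
  moreover have "integral {-1..-0} (\<lambda>x. h (-x)) = integral {0..1} h"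
    using Henstock_Kurzweil_Integration.integral_reflect_real[of 1 0 h] by simp
  ultimately have "integral {0..1} (\<lambda>t. h (1 - t)) = integral {0..1} h" by simp
  moreover have "LI G x y = integral {0..1} h" unfolding LI_def h_def by simp
  moreover have "LI G y x = - integral {0..1} (\<lambda>t. h (1 - t))" unfolding LI_def e by simp
  ultimately show ?thesis by simp
qed

lemma LI_add:
  assumes "continuous_on (closed_segment x y) G" "continuous_on (closed_segment x y) H"
  shows "LI (\<lambda>z. G z + H z) x y = LI G x y + LI H x y"
  unfolding LI_def inner_add_left
  by (rule integral_add; rule integrable_continuous_real; rule LI_cont[OF assms(1)] LI_cont[OF assms(2)])

lemma LI_const: "LI (\<lambda>z. c) x y = c \<bullet> (y - x)"
  unfolding LI_def by simp

lemma LI_bound: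
  assumes "continuous_on (closed_segment x y) G" "\<And>z. z \<in> closed_segment x y \<Longrightarrow> norm (G z) \<le> B"
  shows "\<bar>LI G x y\<bar> \<le> B * norm (y - x)"
proof -
  have "norm (LI G x y) \<le> (B * norm (y - x)) * (1 - 0)"
    unfolding LI_def
  proof (rule integral_bound)
    show "continuous_on {0..1} (\<lambda>t. G (x + t *\<^sub>R (y - x)) \<bullet> (y - x))" by (rule LI_cont[OF assms(1)])
    fix t :: real assume t: "t \<in> {0..1}"
    have "norm (G (x + t *\<^sub>R (y - x)) \<bullet> (y - x)) \<le> norm (G (x + t *\<^sub>R (y - x))) * norm (y - x)"
      by (simp add: Cauchy_Schwarz_ineq2)
    also have "\<dots> \<le> B * norm (y - x)"
      by (rule mult_right_mono[OF assms(2)[OF seg_pt[OF t]]]) simp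
    finally show "norm (G (x + t *\<^sub>R (y - x)) \<bullet> (y - x)) \<le> B * norm (y - x)" .
  qed simp
  then show ?thesis by simp
qed

lemma LI_affine:
  assumes lin: "linear f'" and sym: "\<And>v w. v \<bullet> f' w = w \<bullet> f' v"
  shows "LI (\<lambda>z. c + f' (z - p)) x y =
     (c \<bullet> y + (1/2) * ((y - p) \<bullet> f' (y - p))) - (c \<bullet> x + (1/2) * ((x - p) \<bullet> f' (x - p)))"
proof -
  define d where "d = y - x"
  define w where "w = x - p"
  define \<beta> where "\<beta> = c \<bullet> d + d \<bullet> f' w"
  define \<gamma> where "\<gamma> = (1/2) * (d \<bullet> f' d)"
  have ig: "(c + f' (x + t *\<^sub>R (y - x) - p)) \<bullet> (y - x) = \<beta> + 2 * \<gamma> * t" for t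
  proof -
    have "x + t *\<^sub>R (y - x) - p = w + t *\<^sub>R d" unfolding w_def d_def by (simp add: algebra_simps)
    then have "f' (x + t *\<^sub>R (y - x) - p) = f' w + t *\<^sub>R f' d"
      by (simp add: linear_add[OF lin] linear_scale[OF lin])
    then show ?thesis unfolding \<beta>_def \<gamma>_def d_def[symmetric]
      by (simp add: inner_add_left inner_commute algebra_simps)
  qed
  have "((\<lambda>t. \<beta> + 2 * \<gamma> * t) has_integral ((\<beta> * 1 + \<gamma> * 1^2) - (\<beta> * 0 + \<gamma> * 0^2))) {0..1}"
    by (rule fundamental_theorem_of_calculus)
       (auto intro!: derivative_eq_intros simp: has_real_derivative_iff_has_vector_derivative[symmetric])
  then have "LI (\<lambda>z. c + f' (z - p)) x y = \<beta> + \<gamma>"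
    unfolding LI_def ig by (simp add: integral_unique)
  moreover have "y - p = w + d" unfolding w_def d_def by simp
  moreover have "y = x + d" unfolding d_def by simp
  moreover have "w \<bullet> f' d = d \<bullet> f' w" by (rule sym)
  ultimately show ?thesis
    unfolding \<beta>_def \<gamma>_def w_def[symmetric]
    by (simp add: linear_add[OF lin] inner_add_left inner_add_right algebra_simps)
qed

lemma LI_small:
  fixes F :: "'a::euclidean_space \<Rightarrow> 'a"
  assumes cont: "continuous_on S F" and der: "(F has_derivative f') (at p)"
    and sym: "\<And>v w. v \<bullet> f' w = w \<bullet> f' v" and e: "e > 0"
  shows "\<exists>k>0. \<forall>a b c. dist a b \<le> k \<and> dist b c \<le> k \<and> dist c a \<le> k \<and>
              p \<in> convex hull {a,b,c} \<and> convex hull {a,b,c} \<subseteq> S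
              \<longrightarrow> \<bar>LI F a b + LI F b c + LI F c a\<bar> \<le> e*(dist a b + dist b c + dist c a)^2"
proof -
  from der[unfolded has_derivative_within_alt] e obtain d where bl: "bounded_linear f'" and d: "d > 0"
    and dd: "\<And>y. norm (y - p) < d \<Longrightarrow> norm (F y - F p - f' (y - p)) \<le> e * norm (y - p)"
    by blast
  have lin: "linear f'" using bl bounded_linear.linear by blast
  have cf': "continuous_on UNIV f'" using bl by (simp add: linear_continuous_on)
  define \<psi> where "\<psi> z = F p \<bullet> z + (1/2) * ((z - p) \<bullet> f' (z - p))" for z
  define F0 where "F0 z = F p + f' (z - p)" for z
  define R where "R z = F z - F0 z" for z
  have cF0: "continuous_on T F0" for T unfolding F0_def
    by (intro continuous_intros continuous_on_compose2[OF cf']) auto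
  have cR: "continuous_on S R" unfolding R_def by (intro continuous_intros cont cF0)
  show ?thesis
  proof (intro exI[of _ "d/2"] conjI allI impI)
    show "d/2 > 0" using d by simp
    fix a b c
    assume A: "dist a b \<le> d/2 \<and> dist b c \<le> d/2 \<and> dist c a \<le> d/2 \<and>
              p \<in> convex hull {a,b,c} \<and> convex hull {a,b,c} \<subseteq> S"
    define P where "P = dist a b + dist b c + dist c a"
    have "\<exists>u\<in>{a,b,c}. \<exists>v\<in>{a,b,c}. \<forall>x\<in>convex hull {a,b,c}. \<forall>y\<in>convex hull {a,b,c}. norm (x - y) \<le> norm (u - v)"
      by (rule simplex_extremal_le) auto
    then obtain u v where uv: "u \<in> {a,b,c}" "v \<in> {a,b,c}"
      and ext: "\<And>x y. x \<in> convex hull {a,b,c} \<Longrightarrow> y \<in> convex hull {a,b,c} \<Longrightarrow> norm (x - y) \<le> norm (u - v)"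
      by blast
    have uvb: "norm (u - v) \<le> d/2 \<and> norm (u - v) \<le> P"
      using uv A d unfolding P_def by (auto simp: dist_norm norm_minus_commute)
    have Rb: "norm (R z) \<le> e * P" if z: "z \<in> convex hull {a,b,c}" for z
    proof -
      have nz: "norm (z - p) \<le> norm (u - v)" using ext[OF z] A by blast
      then have "norm (z - p) < d" using uvb d by linarith
      then have "norm (R z) \<le> e * norm (z - p)" using dd unfolding R_def F0_def by (simp add: algebra_simps)
      also have "\<dots> \<le> e * P" using nz uvb e by (intro mult_left_mono) auto
      finally show ?thesis .
    qed
    have edge: "LI F x y = (\<psi> y - \<psi> x) + LI R x y \<and> \<bar>LI R x y\<bar> \<le> e * P * norm (y - x)"
      if sub: "closed_segment x y \<subseteq> convex hull {a,b,c}" for x y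
    proof
      have sS: "closed_segment x y \<subseteq> S" using sub A by blast
      have "F = (\<lambda>z. F0 z + R z)" unfolding R_def by simp
      then have "LI F x y = LI F0 x y + LI R x y"
        using LI_add[of x y F0 R] cF0 continuous_on_subset[OF cR sS] by simp
      moreover have "LI F0 x y = \<psi> y - \<psi> x"
        unfolding F0_def \<psi>_def by (rule LI_affine[OF lin sym])
      ultimately show "LI F x y = (\<psi> y - \<psi> x) + LI R x y" by simp
      show "\<bar>LI R x y\<bar> \<le> e * P * norm (y - x)"
        by (rule LI_bound[OF continuous_on_subset[OF cR sS]]) (use Rb sub in blast)
    qed
    have e1: "LI F a b = (\<psi> b - \<psi> a) + LI R a b" "\<bar>LI R a b\<bar> \<le> e * P * dist a b"
      using edge[OF segments_subset_convex_hull(1)] by (auto simp: dist_norm norm_minus_commute)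
    have e2: "LI F b c = (\<psi> c - \<psi> b) + LI R b c" "\<bar>LI R b c\<bar> \<le> e * P * dist b c"
      using edge[OF segments_subset_convex_hull(3)] by (auto simp: dist_norm norm_minus_commute)
    have e3: "LI F c a = (\<psi> a - \<psi> c) + LI R c a" "\<bar>LI R c a\<bar> \<le> e * P * dist c a"
      using edge[OF segments_subset_convex_hull(5)] by (auto simp: dist_norm norm_minus_commute)
    have "\<bar>LI F a b + LI F b c + LI F c a\<bar> \<le> e * P * dist a b + e * P * dist b c + e * P * dist c a"
      using e1 e2 e3 by linarith
    also have "\<dots> = e * P^2" unfolding P_def by (simp add: power2_eq_square algebra_simps)
    finally show "\<bar>LI F a b + LI F b c + LI F c a\<bar> \<le> e*(dist a b + dist b c + dist c a)^2"
      unfolding P_def .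
  qed
qed

lemma LI_triangle:
  fixes F :: "'a::euclidean_space \<Rightarrow> 'a"
  assumes S: "convex S" and cont: "continuous_on S F"
    and der: "\<And>p. p \<in> S \<Longrightarrow> (F has_derivative f'' p) (at p)"
    and sym: "\<And>p v w. p \<in> S \<Longrightarrow> v \<bullet> f'' p w = w \<bullet> f'' p v"
    and abc: "a \<in> S" "b \<in> S" "c \<in> S"
  shows "LI F a b + LI F b c + LI F c a = 0"
proof (rule goursat_generic[where S=S])
  show "convex hull {a, b, c} \<subseteq> S" using abc S by (simp add: hull_minimal)
  fix x y assume xy: "x \<in> S" "y \<in> S"
  then have cs: "continuous_on (closed_segment x y) F"
    using S cont by (meson closed_segment_subset continuous_on_subset)
  show "LI F x y = LI F x (midpoint x y) + LI F (midpoint x y) y" by (rule LI_mid[OF cs])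
  show "LI F y x = - LI F x y" by (rule LI_rev[OF cs])
next
  fix p :: 'a and e :: real assume "p \<in> S" "e > 0"
  then show "\<exists>k>0. \<forall>a b c. dist a b \<le> k \<and> dist b c \<le> k \<and> dist c a \<le> k \<and>
              p \<in> convex hull {a,b,c} \<and> convex hull {a,b,c} \<subseteq> S
              \<longrightarrow> \<bar>LI F a b + LI F b c + LI F c a\<bar> \<le> e*(dist a b + dist b c + dist c a)^2"
    using LI_small[OF cont der sym] by blast
qed

lemma LI_pos:
  fixes F :: "'a::euclidean_space \<Rightarrow> 'a"
  assumes S: "convex S" "open S" and cont: "continuous_on S F"
    and der: "\<And>p. p \<in> S \<Longrightarrow> (F has_derivative f'' p) (at p)"
    and pd: "\<And>p v. p \<in> S \<Longrightarrow> v \<noteq> 0 \<Longrightarrow> v \<bullet> f'' p v > 0"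
    and xy: "x \<in> S" "y \<in> S"
  shows "LI F x y - F x \<bullet> (y - x) \<ge> 0" "x \<noteq> y \<Longrightarrow> LI F x y - F x \<bullet> (y - x) > 0"
proof -
  have cs: "continuous_on (closed_segment x y) F"
    using S xy cont by (meson closed_segment_subset continuous_on_subset)
  have cc: "continuous_on (closed_segment x y) (\<lambda>z. - F x)" by simp
  have "LI (\<lambda>z. F z + - F x) x y = LI F x y + LI (\<lambda>z. - F x) x y" by (rule LI_add[OF cs cc])
  then have D: "LI F x y - F x \<bullet> (y - x) = LI (\<lambda>z. F z - F x) x y"
    by (simp add: LI_const)
  define d where "d = y - x"
  define g where "g t = (F (x + t *\<^sub>R d) - F x) \<bullet> d" for t
  have Dg: "LI (\<lambda>z. F z - F x) x y = integral {0..1} g" unfolding LI_def g_def d_def by simp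
  have csub: "continuous_on (closed_segment x y) (\<lambda>z. F z - F x)" using cs by (intro continuous_intros)
  have gc: "continuous_on {0..1} g" unfolding g_def d_def by (rule LI_cont[OF csub])
  have gi: "g integrable_on {a..b}" if "0 \<le> a" "b \<le> 1" for a b
    using gc that by (intro integrable_continuous_real) (auto elim: continuous_on_subset)
  show "LI F x y - F x \<bullet> (y - x) \<ge> 0" "x \<noteq> y \<Longrightarrow> LI F x y - F x \<bullet> (y - x) > 0"
  proof -
    { assume "x = y"
      then have "LI F x y - F x \<bullet> (y - x) = 0" unfolding D LI_def by simp
      then have "LI F x y - F x \<bullet> (y - x) \<ge> 0" by simp }
    moreover
    { assume ne: "x \<noteq> y"
      then have d0: "d \<noteq> 0" unfolding d_def by simp
      have inS: "x + t *\<^sub>R d \<in> S" if "t \<in> {0..1}" for t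
        using seg_pt[OF that, of x y] closed_segment_subset[OF xy S(1)] unfolding d_def by blast
      have deriv: "DERIV g t :> (f'' (x + t *\<^sub>R d) d \<bullet> d)" if t: "t \<in> {0..1}" for t
      proof -
        let ?z = "x + t *\<^sub>R d"
        have lin: "linear (f'' ?z)" using der[OF inS[OF t]] has_derivative_linear by blast
        have h1: "((\<lambda>t. x + t *\<^sub>R d) has_derivative (\<lambda>s. s *\<^sub>R d)) (at t)"
          by (auto intro!: derivative_eq_intros)
        have h2: "((\<lambda>t. F (x + t *\<^sub>R d)) has_derivative (\<lambda>s. f'' ?z (s *\<^sub>R d))) (at t)"
          by (rule has_derivative_compose[OF h1 der[OF inS[OF t]]])
        have h3: "(g has_derivative (\<lambda>s. f'' ?z (s *\<^sub>R d) \<bullet> d)) (at t)"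
          unfolding g_def by (auto intro!: derivative_eq_intros h2)
        show ?thesis unfolding has_field_derivative_def
          by (rule has_derivative_eq_rhs[OF h3]) (auto simp: linear_scale[OF lin] mult.commute)
      qed
      have pos: "f'' (x + t *\<^sub>R d) d \<bullet> d > 0" if "t \<in> {0..1}" for t
        using pd[OF inS[OF that] d0] by (simp add: inner_commute)
      have incr: "g s < g t" if "0 \<le> s" "s < t" "t \<le> 1" for s t
      proof (rule DERIV_pos_imp_increasing_open[OF that(2)])
        fix u assume "s < u" "u < t"
        then have "u \<in> {0..1}" using that by auto
        then show "\<exists>y. DERIV g u :> y \<and> 0 < y" using deriv pos by blast
      next
        show "continuous_on {s..t} g" using gc that by (auto elim: continuous_on_subset)
      qed
      have g0: "g 0 = 0" unfolding g_def by simp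
      have gnn: "0 \<le> g t" if "t \<in> {0..1}" for t
        using incr[of 0 t] that g0 by (cases "t = 0") auto
      have ghalf: "g (1/2) > 0" using incr[of 0 "1/2"] g0 by simp
      have "0 \<le> integral {0..1/2} g"
        by (rule Henstock_Kurzweil_Integration.integral_nonneg[OF gi]) (auto intro: gnn)
      moreover have "integral {1/2..1::real} (\<lambda>t. g (1/2)) \<le> integral {1/2..1} g"
      proof (rule Henstock_Kurzweil_Integration.integral_le)
        show "g integrable_on {1/2..1}" by (rule gi) auto
        fix t assume "t \<in> {1/2..1::real}"
        then show "g (1/2) \<le> g t" using incr[of "1/2" t] by (cases "t = 1/2") (auto simp del: divide_const_simps)
      qed (intro integrable_continuous_real continuous_intros)
      moreover have "integral {1/2..1::real} (\<lambda>t. g (1/2)) = g (1/2) / 2" by simp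
      moreover have "integral {0..1/2} g + integral {1/2..1} g = integral {0..1} g"
        by (rule Henstock_Kurzweil_Integration.integral_combine) (auto intro: gi)
      ultimately have "integral {0..1} g > 0" using ghalf by linarith
      then have "LI F x y - F x \<bullet> (y - x) > 0" unfolding D Dg . }
    ultimately show "LI F x y - F x \<bullet> (y - x) \<ge> 0" "x \<noteq> y \<Longrightarrow> LI F x y - F x \<bullet> (y - x) > 0"
      by (cases "x = y"; force)+
  qed
qed


theorem mainTheorem9:
  fixes U :: "(real ^ 'p) set" and q :: "real ^ 'p \<Rightarrow> real ^ 'p"
  assumes "compact U" and "convex U" and "interior U \<noteq> {}"
    and "continuous_on U q"
    and "\<And>u. u \<in> interior U \<Longrightarrow> q differentiable (at u)"
    and "\<And>u. u \<in> interior U \<Longrightarrow> transpose (jacobian q (at u)) = jacobian q (at u)"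
    and "\<And>u v. u \<in> interior U \<Longrightarrow> v \<noteq> 0 \<Longrightarrow> v \<bullet> (jacobian q (at u) *v v) > 0"
    and "convex (q ` U)"
  shows "\<forall>(k::nat) (u::nat \<Rightarrow> real ^ 'p). k \<ge> 1 \<and> (\<forall>i\<in>{1..k+1}. u i \<in> interior U) \<and> u (k+1) = u 1 \<longrightarrow>
           (\<Sum>i=1..k. u (i+1) \<bullet> (q (u (i+1)) - q (u i))) \<ge> 0 \<and>
           ((\<exists>i\<in>{1..k}. u i \<noteq> u 1) \<longrightarrow> (\<Sum>i=1..k. u (i+1) \<bullet> (q (u (i+1)) - q (u i))) > 0)"
proof (intro allI impI)
  fix k :: nat and u :: "nat \<Rightarrow> real ^ 'p"
  assume H: "k \<ge> 1 \<and> (\<forall>i\<in>{1..k+1}. u i \<in> interior U) \<and> u (k+1) = u 1"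
  define S where "S = interior U"
  define f'' where "f'' p = frechet_derivative q (at p)" for p
  have Sc: "convex S" "open S" unfolding S_def using assms(2) by (simp_all add: convex_interior)
  have cont: "continuous_on S q" unfolding S_def using assms(4) interior_subset continuous_on_subset by blast
  have der: "(q has_derivative f'' p) (at p)" if "p \<in> S" for p
    using assms(5)[of p] that unfolding S_def f''_def by (simp add: frechet_derivative_works)
  have Jv: "jacobian q (at p) *v v = f'' p v" if "p \<in> S" for p v
  proof -
    have "linear (f'' p)" using der[OF that] has_derivative_linear by blast
    then show ?thesis unfolding jacobian_def f''_def[symmetric] using matrix_vector_mul(2) by metis
  qed
  have sym: "v \<bullet> f'' p w = w \<bullet> f'' p v" if p: "p \<in> S" for p v w
  proof -
    let ?J = "jacobian q (at p)"
    have "v \<bullet> (?J *v w) = (v v* ?J) \<bullet> w" by (simp add: dot_lmul_matrix)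
    also have "v v* ?J = transpose ?J *v v" by simp
    also have "\<dots> = ?J *v v" using assms(6) p unfolding S_def by simp
    finally show ?thesis using Jv[OF p] by (simp add: inner_commute)
  qed
  have pd: "v \<bullet> f'' p v > 0" if "p \<in> S" "v \<noteq> 0" for p v
    using assms(7)[of p v] that Jv[OF that(1)] unfolding S_def by simp
  have uS: "u i \<in> S" if "i \<in> {1..k+1}" for i using H that unfolding S_def by blast
  define L where "L i = LI q (u i) (u (Suc i))" for i
  define D where "D i = L i - q (u i) \<bullet> (u (Suc i) - u i)" for i
  define \<phi> where "\<phi> j = LI q (u 1) (u j)" for j
  define \<rho> where "\<rho> j = u j \<bullet> q (u j)" for j
  have Lphi: "L i = \<phi> (Suc i) - \<phi> i" if i: "i \<in> {1..k}" for i
  proof -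
    have u1: "u 1 \<in> S" "u i \<in> S" "u (Suc i) \<in> S" using uS i H by auto
    have t: "LI q (u 1) (u i) + LI q (u i) (u (Suc i)) + LI q (u (Suc i)) (u 1) = 0"
      by (rule LI_triangle[OF Sc(1) cont der sym u1])
    have cs: "continuous_on (closed_segment (u 1) (u (Suc i))) q"
      using u1 Sc cont by (meson closed_segment_subset continuous_on_subset)
    show ?thesis using t LI_rev[OF cs] unfolding L_def \<phi>_def by simp
  qed
  have sumL: "(\<Sum>i=1..k. L i) = 0"
  proof -
    have "(\<Sum>i=1..k. L i) = (\<Sum>i=1..k. \<phi> (Suc i) - \<phi> i)" using Lphi by (rule sum.cong[OF refl])
    also have "\<dots> = \<phi> (Suc k) - \<phi> 1" using H by (intro sum_Suc_diff) auto
    also have "\<dots> = 0" using H unfolding \<phi>_def by simp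
    finally show ?thesis .
  qed
  have sumR: "(\<Sum>i=1..k. \<rho> (Suc i) - \<rho> i) = 0"
  proof -
    have "(\<Sum>i=1..k. \<rho> (Suc i) - \<rho> i) = \<rho> (Suc k) - \<rho> 1" using H by (intro sum_Suc_diff) auto
    also have "\<dots> = 0" using H unfolding \<rho>_def by simp
    finally show ?thesis .
  qed
  have tmq: "u (i+1) \<bullet> (q (u (i+1)) - q (u i)) = (\<rho> (Suc i) - \<rho> i) + D i - L i" for i
    unfolding \<rho>_def D_def by (simp add: inner_diff_left inner_diff_right inner_commute)
  have T: "(\<Sum>i=1..k. u (i+1) \<bullet> (q (u (i+1)) - q (u i))) = (\<Sum>i=1..k. D i)"
    unfolding tmq using sumR sumL by (simp add: sum.distrib sum_subtractf)
  have Dnn: "D i \<ge> 0" if "i \<in> {1..k}" for i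
    unfolding D_def L_def using that uS by (intro LI_pos(1)[OF Sc cont der pd]) auto
  have Dpos: "D i > 0" if "i \<in> {1..k}" "u i \<noteq> u (Suc i)" for i
    unfolding D_def L_def using that uS by (intro LI_pos(2)[OF Sc cont der pd]) auto
  show "(\<Sum>i=1..k. u (i+1) \<bullet> (q (u (i+1)) - q (u i))) \<ge> 0 \<and>
           ((\<exists>i\<in>{1..k}. u i \<noteq> u 1) \<longrightarrow> (\<Sum>i=1..k. u (i+1) \<bullet> (q (u (i+1)) - q (u i))) > 0)"
  proof (intro conjI impI)
    show "(\<Sum>i=1..k. u (i+1) \<bullet> (q (u (i+1)) - q (u i))) \<ge> 0"
      unfolding T by (rule sum_nonneg) (use Dnn in auto)
    assume "\<exists>i\<in>{1..k}. u i \<noteq> u 1"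
    then obtain j where j: "j \<in> {1..k}" "u j \<noteq> u 1" by blast
    have "\<exists>i\<in>{1..k}. u i \<noteq> u (Suc i)"
    proof (rule ccontr)
      assume "\<not> ?thesis"
      then have eq: "\<And>i. i \<in> {1..k} \<Longrightarrow> u (Suc i) = u i" by auto
      have "u i = u 1" if "i \<in> {1..k}" for i
        using that
      proof (induction i)
        case 0 then show ?case by simp
      next
        case (Suc n)
        show ?case
        proof (cases "n = 0")
          case True then show ?thesis by simp
        next
          case False
          then have "n \<in> {1..k}" using Suc.prems by auto
          then show ?thesis using Suc.IH eq by auto
        qed
      qed
      then show False using j by blast
    qed
    then obtain i where i: "i \<in> {1..k}" "u i \<noteq> u (Suc i)" by blast
    show "(\<Sum>i=1..k. u (i+1) \<bullet> (q (u (i+1)) - q (u i))) > 0"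
      unfolding T using sum_pos2[of "{1..k}" i D] i Dpos[OF i] Dnn by auto
  qed
qed

end
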